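(* Let $\alpha>1$ and $D,R_{tot},L_0>0$. For $\mu>0$ let $\sigma_0=\sigma_0^{(\mu)}$ be the positive solution of $-u''=-u+u^\alpha$ on $[-\mu L_0,\mu L_0]$ with zero Dirichlet data, and $\|\sigma_0\|_1=\int_{-\mu L_0}^{\mu L_0}\sigma_0$. (i) Let $k_{nf},k_{pf}>0$ satisfy $$\Lambda(k_{nf},k_{pf})=\frac{k_{nf}}{k_{pf}}-\frac{1}{\alpha}\left(\frac{\alpha-1}{\alpha}\sqrt{\frac{k_{nf}}{D}}\frac{R_{tot}}{\|\sigma_0\|_1}\right)^{\alpha-1}\le 0,$$ where $\sigma_0=\sigma_0^{(\mu)}$ with $\mu=\sqrt{k_{nf}/D}$. Let $\lambda>0$ be a root of $g(\lambda)=\frac{k_{nf}}{k_{pf}}-\lambda^{\alpha-1}+\frac{1}{R_{tot}}\lambda^{\alpha}\frac{1}{\mu}\|\sigma_0\|_1$. Then $\mu>0$, $\lambda>0$ and $\Lambda^*(\mu,\lambda):=\mu R_{tot}-\lambda\|\sigma_0\|_1>0$. (ii) Conversely, let $\mu>0$, $\lambda>0$ with $\Lambda^*(\mu,\lambda)>0$, and define $k_{nf}=D\mu^2$ and $$k_{pf}=\frac{D\mu^2}{\lambda^{\alpha-1}-\frac{\lambda^{\alpha}\|\sigma_0\|_1}{\mu R_{tot}}}.$$ Then $k_{nf}>0$, $k_{pf}>0$, $\Lambda(k_{nf},k_{pf})\le0$, and $\lambda$ is a root of $g$ for these parameters. Thus the constrained model $Y_j=R(X_j;k_{nf},k_{pf})+\epsilon_j$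 (with $R$ a solution of the integro-differential equation $-DR''=-k_{nf}R+k_{pf}R^\alpha(1-\int_{-L_0}^{L_0}R/R_{tot})$, $R(\pm L_0)=0$) is equivalently reparametrized as $Y_j=\lambda\sigma_0(\mu X_j)+\epsilon_j$ subject to $\mu>0$, $\lambda>0$, $\Lambda^*(\mu,\lambda)>0$.
   Context: The positive solution of $-u''=-u+u^\alpha$ with zero Dirichlet data on a bounded symmetric interval exists and is unique (part of the setting). For given $(k_{nf},k_{pf})$, $\lambda\sigma_0(\mu x)$ with $\mu=\sqrt{k_{nf}/D}$ solves the integro-differential equation iff $g(\lambda)=0$. *)

theory Defs
  imports "HOL-Analysis.Analysis"
begin

text \<open>u is the positive solution of  -u'' = -u + u^alpha  on [-a,a] with u(-a) = u(a) = 0.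
  Convention: u is extended by zero outside [-a,a] (so that the solution is a unique function).\<close>
definition is_pos_sol :: "real \<Rightarrow> real \<Rightarrow> (real \<Rightarrow> real) \<Rightarrow> bool" where
  "is_pos_sol \<alpha> a u \<longleftrightarrow>
     continuous_on {-a..a} u \<and>
     (\<exists>u'. \<forall>x\<in>{-a<..<a}. (u has_real_derivative u' x) (at x) \<and>
                           (u' has_real_derivative (u x - (u x) powr \<alpha>)) (at x)) \<and>
     (\<forall>x\<in>{-a<..<a}. u x > 0) \<and> u (-a) = 0 \<and> u a = 0 \<and>
     (\<forall>x. x \<notin> {-a..a} \<longrightarrow> u x = 0)"

definition sigma0 :: "real \<Rightarrow> real \<Rightarrow> real \<Rightarrow> (real \<Rightarrow> real)" where
  "sigma0 \<alpha> L0 mu = (THE u. is_pos_sol \<alpha> (mu * L0) u)"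

definition norm1 :: "real \<Rightarrow> real \<Rightarrow> real \<Rightarrow> real" where
  "norm1 \<alpha> L0 mu = integral {-(mu * L0)..mu * L0} (sigma0 \<alpha> L0 mu)"

definition Lam :: "real \<Rightarrow> real \<Rightarrow> real \<Rightarrow> real \<Rightarrow> real \<Rightarrow> real \<Rightarrow> real" where
  "Lam \<alpha> D Rtot L0 knf kpf =
     knf / kpf - (1 / \<alpha>) *
       (((\<alpha> - 1) / \<alpha>) * sqrt (knf / D) * Rtot / norm1 \<alpha> L0 (sqrt (knf / D))) powr (\<alpha> - 1)"

definition gfun :: "real \<Rightarrow> real \<Rightarrow> real \<Rightarrow> real \<Rightarrow> real \<Rightarrow> real \<Rightarrow> real \<Rightarrow> real" where
  "gfun \<alpha> D Rtot L0 knf kpf lam =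
     (let mu = sqrt (knf / D) in
      knf / kpf - lam powr (\<alpha> - 1) + (1 / Rtot) * lam powr \<alpha> * (1 / mu) * norm1 \<alpha> L0 mu)"

definition Lam_star :: "real \<Rightarrow> real \<Rightarrow> real \<Rightarrow> real \<Rightarrow> real \<Rightarrow> real" where
  "Lam_star \<alpha> Rtot L0 mu lam = mu * Rtot - lam * norm1 \<alpha> L0 mu"

end

theory Submission
  imports Defs
begin

lemma key:
  fixes a c l :: real
  assumes a: "a > 1" and c: "c > 0" and l: "l > 0"
  shows "l powr (a - 1) - c * l powr a \<le> (1/a) * ((a-1)/(a*c)) powr (a - 1)"
proof -
  define L where "L = (a-1)/(a*c)"
  have L: "L > 0" using a c by (simp add: L_def)
  define x where "x = l / L"
  have x: "x > 0" using l L by (simp add: x_def)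
  have lx: "l = L * x" using L by (simp add: x_def)
  have y: "1 * x powr (a-1) \<le> 1 powr a / a + (x powr (a-1)) powr (a/(a-1)) / (a/(a-1))"
    by (rule Youngs_inequality) (use a in \<open>auto simp: field_simps\<close>)
  have "(x powr (a-1)) powr (a/(a-1)) = x powr a" using a by (simp add: powr_powr)
  with y have y2: "x powr (a-1) \<le> 1/a + ((a-1)/a) * x powr a" by (simp add: mult.commute)
  have e1: "l powr (a-1) = L powr (a-1) * x powr (a-1)" using lx L x by (simp add: powr_mult)
  have e2: "c * l powr a = ((a-1)/a) * L powr (a-1) * x powr a"
  proof -
    have lpa: "l powr a = L powr (a-1) * L * x powr a" using lx L x
      by (simp add: powr_mult powr_diff)
    moreover have "c * L = (a-1)/a" using a c by (simp add: L_def field_simps)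
    have "c * l powr a = (c * L) * (L powr (a-1) * x powr a)" unfolding lpa by (simp add: ac_simps)
    then show ?thesis using \<open>c * L = (a-1)/a\<close> by simp
  qed
  have "L powr (a-1) * x powr (a-1) \<le> L powr (a-1) * (1/a + ((a-1)/a) * x powr a)"
    using y2 L by (intro mult_left_mono) auto
  then show ?thesis unfolding e1 e2 L_def[symmetric] by (simp add: algebra_simps)
qed

lemma npos:
  assumes "\<forall>mu>0. \<exists>!u. is_pos_sol \<alpha> (mu * L0) u" "mu > 0" "L0 > 0"
  shows "norm1 \<alpha> L0 mu > 0"
proof -
  have "is_pos_sol \<alpha> (mu * L0) (sigma0 \<alpha> L0 mu)"
    unfolding sigma0_def using assms by (metis theI')
  then have c: "continuous_on {-(mu*L0)..mu*L0} (sigma0 \<alpha> L0 mu)"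
    and p: "\<forall>x\<in>{-(mu*L0)<..<mu*L0}. sigma0 \<alpha> L0 mu x > 0"
    and e: "sigma0 \<alpha> L0 mu (-(mu*L0)) = 0" "sigma0 \<alpha> L0 mu (mu*L0) = 0"
    unfolding is_pos_sol_def by auto
  have ml: "mu * L0 > 0" using assms by simp
  have nn: "\<And>x. x \<in> {-(mu*L0)..mu*L0} \<Longrightarrow> sigma0 \<alpha> L0 mu x \<ge> 0"
  proof -
    fix x assume "x \<in> {-(mu*L0)..mu*L0}"
    then consider "x = -(mu*L0)" | "x = mu*L0" | "x \<in> {-(mu*L0)<..<mu*L0}" by fastforce
    then show "sigma0 \<alpha> L0 mu x \<ge> 0" using e p by cases (auto intro: less_imp_le)
  qed
  have "integral {-(mu*L0)..mu*L0} (sigma0 \<alpha> L0 mu) \<ge> 0"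
    by (rule integral_nonneg[OF integrable_continuous_interval[OF c]]) (use nn in auto)
  moreover have "integral {-(mu*L0)..mu*L0} (sigma0 \<alpha> L0 mu) \<noteq> 0"
  proof
    assume "integral {-(mu*L0)..mu*L0} (sigma0 \<alpha> L0 mu) = 0"
    then have "\<forall>x \<in> {-(mu*L0)..mu*L0}. sigma0 \<alpha> L0 mu x = 0"
      using integral_eq_0_iff[OF c _ nn] ml by simp
    moreover have "sigma0 \<alpha> L0 mu 0 > 0" using p ml by auto
    ultimately show False using ml by auto
  qed
  ultimately show ?thesis unfolding norm1_def by linarith
qed
theorem proposition1:
  fixes \<alpha> D Rtot L0 :: real
  assumes "\<alpha> > 1" and "D > 0" and "Rtot > 0" and "L0 > 0"
    and setting: "\<forall>mu>0. \<exists>!u. is_pos_sol \<alpha> (mu * L0) u"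
  shows
    "(\<forall>knf kpf lam. knf > 0 \<longrightarrow> kpf > 0 \<longrightarrow> Lam \<alpha> D Rtot L0 knf kpf \<le> 0 \<longrightarrow>
        lam > 0 \<longrightarrow> gfun \<alpha> D Rtot L0 knf kpf lam = 0 \<longrightarrow>
        (let mu = sqrt (knf / D) in mu > 0 \<and> lam > 0 \<and> Lam_star \<alpha> Rtot L0 mu lam > 0))
   \<and>
    (\<forall>mu lam. mu > 0 \<longrightarrow> lam > 0 \<longrightarrow> Lam_star \<alpha> Rtot L0 mu lam > 0 \<longrightarrow>
        (let knf = D * mu^2;
             kpf = D * mu^2 / (lam powr (\<alpha> - 1) - lam powr \<alpha> * norm1 \<alpha> L0 mu / (mu * Rtot))
         in knf > 0 \<and> kpf > 0 \<and> Lam \<alpha> D Rtot L0 knf kpf \<le> 0 \<and>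
            gfun \<alpha> D Rtot L0 knf kpf lam = 0))"
proof (intro conjI allI impI)
  fix knf kpf lam :: real
  assume k: "knf > 0" "kpf > 0" "Lam \<alpha> D Rtot L0 knf kpf \<le> 0" "lam > 0"
    and g: "gfun \<alpha> D Rtot L0 knf kpf lam = 0"
  define mu where "mu = sqrt (knf / D)"
  define N where "N = norm1 \<alpha> L0 mu"
  have mu: "mu > 0" using k assms by (simp add: mu_def)
  have g2: "knf / kpf = lam powr (\<alpha> - 1) * (1 - lam * N / (mu * Rtot))"
  proof -
    have "lam powr \<alpha> = lam powr (\<alpha> - 1) * lam" using k by (simp add: powr_diff)
    then show ?thesis using g mu assms unfolding gfun_def Let_def mu_def[symmetric] N_def[symmetric]
      by (simp add: field_simps)
  qed
  have "knf / kpf > 0" using k by simp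
  moreover have "lam powr (\<alpha> - 1) > 0" using k by simp
  ultimately have "1 - lam * N / (mu * Rtot) > 0" using g2 by (metis zero_less_mult_pos)
  then have "lam * N < mu * Rtot" using mu assms by (simp add: field_simps)
  then show "let mu = sqrt (knf / D) in mu > 0 \<and> lam > 0 \<and> Lam_star \<alpha> Rtot L0 mu lam > 0"
    using mu k unfolding Let_def mu_def[symmetric] Lam_star_def N_def by simp
next
  fix mu lam :: real
  assume m: "mu > 0" "lam > 0" "Lam_star \<alpha> Rtot L0 mu lam > 0"
  define N where "N = norm1 \<alpha> L0 mu"
  have N: "N > 0" unfolding N_def by (rule npos[OF setting m(1) assms(4)])
  have lt: "lam * N < mu * Rtot" using m unfolding Lam_star_def N_def by simp
  define den where "den = lam powr (\<alpha> - 1) - lam powr \<alpha> * N / (mu * Rtot)"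
  have lpa: "lam powr \<alpha> = lam powr (\<alpha> - 1) * lam" using m by (simp add: powr_diff)
  have den2: "den = lam powr (\<alpha> - 1) * (1 - lam * N / (mu * Rtot))"
    unfolding den_def lpa by (simp add: algebra_simps)
  have "1 - lam * N / (mu * Rtot) > 0" using lt m assms by (simp add: field_simps)
  then have dp: "den > 0" unfolding den2 using m by simp
  have sq: "sqrt (D * mu^2 / D) = mu" using assms m by simp
  have kk: "D * mu^2 / (D * mu^2 / den) = den" using assms m dp by simp
  have kpos: "D * mu^2 > 0" "D * mu^2 / den > 0" using assms m dp by auto
  have L: "Lam \<alpha> D Rtot L0 (D * mu^2) (D * mu^2 / den) \<le> 0"
  proof -
    have "den \<le> (1/\<alpha>) * ((\<alpha>-1)/(\<alpha>*(N/(mu*Rtot)))) powr (\<alpha> - 1)"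
      unfolding den_def using key[of \<alpha> "N/(mu*Rtot)" lam] assms m N by (simp add: mult.commute)
    moreover have "(\<alpha>-1)/(\<alpha>*(N/(mu*Rtot))) = ((\<alpha> - 1) / \<alpha>) * mu * Rtot / N"
      using assms m N by (simp add: field_simps)
    ultimately show ?thesis unfolding Lam_def sq kk N_def by (simp add: mult.assoc)
  qed
  have G: "gfun \<alpha> D Rtot L0 (D * mu^2) (D * mu^2 / den) lam = 0"
    unfolding gfun_def Let_def sq kk unfolding den_def N_def by (simp add: field_simps)
  show "let knf = D * mu^2;
             kpf = D * mu^2 / (lam powr (\<alpha> - 1) - lam powr \<alpha> * norm1 \<alpha> L0 mu / (mu * Rtot))
         in knf > 0 \<and> kpf > 0 \<and> Lam \<alpha> D Rtot L0 knf kpf \<le> 0 \<and>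
            gfun \<alpha> D Rtot L0 knf kpf lam = 0"
    unfolding Let_def N_def[symmetric] den_def[symmetric] using kpos L G by simp
qed

end
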